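(* Assume the setting, majorant assumptions and constants of the context. Let $x_k$ be an iterate of the INL-CondG method with $x_k\in C\cap B(x_*,\sigma)\setminus\{x_*\}$ and $F(x_k)\neq0$, where the invertible matrix $M_k$ satisfies $\|M_k^{-1}F'(x_k)\|\le\omega_1$, $\|M_k^{-1}F'(x_k)-I\|\le\omega_2$, and for some invertible $P_k$ and scalar $\eta_k$ the residual satisfies $\|P_kr_k\|\le\eta_k\|P_kF(x_k)\|$ and $0\le\eta_k\,\mathrm{cond}(P_kF'(x_k))\le\vartheta$; let $\theta_k\ge0$ and $x_{k+1}=\mathrm{CondG}(y_k,x_k,\theta_k\|s_k\|^2)$. Then $$\|x_{k+1}-x_*\|\le\omega_1(1+\vartheta)(1+\sqrt{2\theta_k})|n_f(\|x_k-x_*\|)|+\big(\omega_1[(1+\vartheta)\sqrt{2\theta_k}+\vartheta]+\omega_2\big)\|x_k-x_*\|,$$ where $n_f(t)=t-f(t)/f'(t)$. If moreover $\theta_k\le\lambda^2/2$, then $\|x_{k+1}-x_*\|<\|x_k-x_*\|$.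
   Context: Setting: $\Omega\subset\mathbb{R}^n$ is open, $F:\Omega\to\mathbb{R}^n$ is continuously differentiable with Jacobian $F'(x)$, $C\subset\Omega$ is a nonempty convex compact set, and $x_*\in C$ satisfies $F(x_* )=0$ with $F'(x_* )$ nonsingular. $\|\cdot\|$ is the Euclidean norm on $\mathbb{R}^n$ and the induced operator norm on matrices; $B(a,\delta)$ is the open ball of center $a$ and radius $\delta$; $\mathrm{cond}(A)=\|A^{-1}\|\|A\|$. Majorant assumptions: $R>0$, $\kappa:=\sup\{t\in[0,R): B(x_*,t)\subset\Omega\}$, and $f:[0,R)\to\mathbb{R}$ is continuously differentiable with $$\|F'(x_* )^{-1}[F'(x)-F'(x_*+\tau(x-x_* ))]\|\le f'(\|x-x_*\|)-f'(\tau\|x-x_*\|)\quad\text{for all }\tau\in[0,1],\ x\in B(x_*,\kappa),$$ (h1) $f(0)=0$, $f'(0)=-1$; (h2) $f'$ is strictly increasing. Constants: $0\le\vartheta<1$, $0\le\omega_2<\omega_1$, $\omega_1\vartheta+\omega_2<1$, $\lambda\in[0,(1-\omega_2-\omega_1\vartheta)/(\omega_1(1+\vartheta)))$; $\nu:=\sup\{t\in[0,R): f'(t)<0\}$; $\rho:=\sup\{\delta\in(0,\nu): \omega_1(1+\vartheta)(1+\lambda)\big(\tfrac{f(t)}{tf'(t)}-1\big)+\omega_1[(1+\vartheta)\lambda+\vartheta]+\omega_2<1 \text{ for all } t\in(0,\delta)\}$; $\sigma:=\min\{\kappa,\rho\}$. CondG procedure $z=\mathrm{CondG}(y,x,\varepsilon)$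 (for $y\in\mathbb{R}^n$, $x\in C$, $\varepsilon\ge0$): set $z_1=x$, $t=1$. (P1) Compute an optimal solution $u_t$ of $g_t^*=\min_{u\in C}\langle z_t-y,u-z_t\rangle$. (P2) If $g_t^*\ge-\varepsilon$, set $z=z_t$ and stop; otherwise set $\alpha_t=\min\{1,-g_t^*/\|u_t-z_t\|^2\}$, $z_{t+1}=z_t+\alpha_t(u_t-z_t)$, $t\leftarrow t+1$ and go to (P1). INL-CondG method: given $x_0\in C$ and $\{\theta_j\}\subset[0,\infty)$, for $k=0,1,\dots$: if $F(x_k)=0$ stop; otherwise choose an invertible matrix $M_k$ (approximating $F'(x_k)$) and compute $(s_k,r_k,y_k)$ with $M_ks_k=-F(x_k)+r_k$, $y_k=x_k+s_k$; then set $x_{k+1}=\mathrm{CondG}(y_k,x_k,\theta_k\|s_k\|^2)$. *)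

theory Defs
  imports "HOL-Analysis.Analysis"
begin

definition mat_norm :: "real^'n^'n \<Rightarrow> real" where
  "mat_norm A = onorm (\<lambda>v. A *v v)"

definition cond_num :: "real^'n^'n \<Rightarrow> real" where
  "cond_num A = mat_norm (matrix_inv A) * mat_norm A"

definition newton_fun :: "(real \<Rightarrow> real) \<Rightarrow> (real \<Rightarrow> real) \<Rightarrow> real \<Rightarrow> real" where
  "newton_fun f df t = t - f t / df t"

definition cg_obj :: "real^'n \<Rightarrow> real^'n \<Rightarrow> real^'n \<Rightarrow> real" where
  "cg_obj y z u = inner (z - y) (u - z)"

text \<open>z is a possible output of the procedure CondG(y, x, eps) over the set C:
  there is a run z_1 = x, ..., z_T with chosen optimal solutions u_1, ..., u_T of (P1),
  where the stopping test fails for t < T and succeeds at t = T, and z = z_T.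
  (The optimal solution u_t is not unique in general, hence a relation.)\<close>
definition CondG_output :: "(real^'n) set \<Rightarrow> real^'n \<Rightarrow> real^'n \<Rightarrow> real \<Rightarrow> real^'n \<Rightarrow> bool" where
  "CondG_output C y x eps z \<longleftrightarrow>
     (\<exists>T::nat. \<exists>zs us :: nat \<Rightarrow> real^'n.
        1 \<le> T \<and> zs 1 = x \<and>
        (\<forall>t\<in>{1..T}. us t \<in> C \<and> (\<forall>v\<in>C. cg_obj y (zs t) (us t) \<le> cg_obj y (zs t) v)) \<and>
        (\<forall>t\<in>{1..<T}. cg_obj y (zs t) (us t) < - eps \<and>
            zs (t + 1) = zs t + min 1 (- cg_obj y (zs t) (us t) / (norm (us t - zs t))\<^sup>2)
                                    *\<^sub>R (us t - zs t)) \<and>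
        cg_obj y (zs T) (us T) \<ge> - eps \<and>
        z = zs T)"

end

theory Submission
  imports Defs
begin


lemma mat_norm_bound: "norm (A *v v) \<le> mat_norm A * norm v" for A :: "real^'n^'n"
  unfolding mat_norm_def by (rule onorm[OF matrix_vector_mul_bounded_linear])

lemma mat_norm_nonneg: "0 \<le> mat_norm A" for A :: "real^'n^'n"
  unfolding mat_norm_def by (rule onorm_pos_le[OF matrix_vector_mul_bounded_linear])

lemma matrix_inv_props:
  fixes A :: "real^'n^'n"
  assumes "invertible A"
  shows "A ** matrix_inv A = mat 1" "matrix_inv A ** A = mat 1"
proof -
  have "\<exists>A'. A ** A' = mat 1 \<and> A' ** A = mat 1" using assms unfolding invertible_def by blast
  hence "A ** matrix_inv A = mat 1 \<and> matrix_inv A ** A = mat 1"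
    unfolding matrix_inv_def by (rule someI_ex)
  thus "A ** matrix_inv A = mat 1" "matrix_inv A ** A = mat 1" by auto
qed

lemma condg_bound:
  fixes z :: "real^'n"
  assumes "CondG_output C y x eps z" "xs \<in> C" "eps \<ge> 0"
  shows "norm (z - xs) \<le> norm (y - xs) + sqrt eps"
proof -
  obtain T :: nat and zs us :: "nat \<Rightarrow> real^'n" where T: "1 \<le> T" and opt: "\<forall>t\<in>{1..T}. us t \<in> C \<and> (\<forall>v\<in>C. cg_obj y (zs t) (us t) \<le> cg_obj y (zs t) v)"
    and stop: "cg_obj y (zs T) (us T) \<ge> - eps" and z: "z = zs T"
    using assms(1) unfolding CondG_output_def by (elim exE conjE) blast
  have "cg_obj y z (us T) \<le> cg_obj y z xs" using opt T assms(2) z by auto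
  hence ip: "inner (z - y) (xs - z) \<ge> - eps" using stop z unfolding cg_obj_def by simp
  define a where "a = norm (z - xs)"
  define b where "b = norm (y - xs)"
  have "a^2 = inner (z - y) (z - xs) + inner (y - xs) (z - xs)"
    unfolding a_def by (simp add: power2_norm_eq_inner inner_diff_left inner_diff_right inner_commute)
  also have "inner (z - y) (z - xs) = - inner (z - y) (xs - z)" by (simp add: inner_diff_right)
  also have "inner (y - xs) (z - xs) \<le> b * a" unfolding a_def b_def by (rule norm_cauchy_schwarz)
  finally have key: "a^2 \<le> eps + b * a" using ip by linarith
  show ?thesis
  proof (rule ccontr)
    assume "\<not> ?thesis"
    hence lt: "b + sqrt eps < a" unfolding a_def b_def by simp
    have b0: "b \<ge> 0" unfolding b_def by simp
    have s0: "sqrt eps \<ge> 0" using assms(3) by simp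
    have "eps = sqrt eps * sqrt eps" using assms(3) by simp
    also have "\<dots> \<le> a * sqrt eps" using lt b0 s0 by (intro mult_right_mono) auto
    finally have "eps + b * a \<le> a * (b + sqrt eps)" by (simp add: algebra_simps)
    also have "\<dots> < a * a" using lt b0 s0 by (intro mult_strict_left_mono) linarith+
    finally show False using key by (simp add: power2_eq_square)
  qed
qed

lemma mv_bound:
  fixes F :: "real^'n \<Rightarrow> real^'n" and F' :: "real^'n \<Rightarrow> real^'n^'n" and K :: "real^'n^'n"
    and f df :: "real \<Rightarrow> real"
  assumes t_def: "t = norm (x - xs)" and t0: "0 < t" and tR: "t < R"
    and seg: "\<And>\<tau>. \<tau> \<in> {0..1} \<Longrightarrow> (F has_derivative (\<lambda>h. F' (xs + \<tau> *\<^sub>R (x - xs)) *v h)) (at (xs + \<tau> *\<^sub>R (x - xs)))"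
    and f_deriv: "\<And>s. s \<in> {0..<R} \<Longrightarrow> (f has_real_derivative df s) (at s within {0..<R})"
    and bnd: "\<And>\<tau>. \<tau> \<in> {0..1} \<Longrightarrow> mat_norm (K ** (F' x - F' (xs + \<tau> *\<^sub>R (x - xs)))) \<le> df t - df (\<tau> * t)"
    and f0: "f 0 = 0"
  shows "norm (K *v (F x - F xs - F' x *v (x - xs))) \<le> t * df t - f t"
proof -
  define e where "e = x - xs"
  define G where "G \<tau> = K *v F (xs + \<tau> *\<^sub>R e) - \<tau> *\<^sub>R (K *v (F' x *v e))" for \<tau>
  define G' where "G' \<tau> = K *v (F' (xs + \<tau> *\<^sub>R e) *v e) - K *v (F' x *v e)" for \<tau>
  define \<phi> where "\<phi> \<tau> = \<tau> * t * df t - f (\<tau> * t)" for \<tau>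
  define \<phi>' where "\<phi>' \<tau> = t * df t - df (\<tau> * t) * t" for \<tau>
  have Gd: "(G has_vector_derivative G' \<tau>) (at \<tau>)" if "\<tau> \<in> {0..1}" for \<tau>
  proof -
    have l: "((\<lambda>\<tau>. xs + \<tau> *\<^sub>R e) has_derivative (\<lambda>h. h *\<^sub>R e)) (at \<tau>)"
      by (auto intro!: derivative_eq_intros)
    have c: "((\<lambda>\<tau>. F (xs + \<tau> *\<^sub>R e)) has_derivative (\<lambda>h. F' (xs + \<tau> *\<^sub>R e) *v (h *\<^sub>R e))) (at \<tau>)"
      using has_derivative_compose[OF l seg[OF that, folded e_def]] by simp
    have c2: "((\<lambda>\<tau>. K *v F (xs + \<tau> *\<^sub>R e)) has_derivative (\<lambda>h. K *v (F' (xs + \<tau> *\<^sub>R e) *v (h *\<^sub>R e)))) (at \<tau>)"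
      by (rule bounded_linear.has_derivative[OF matrix_vector_mul_bounded_linear c])
    have c3: "((\<lambda>\<tau>. \<tau> *\<^sub>R (K *v (F' x *v e))) has_derivative (\<lambda>h. h *\<^sub>R (K *v (F' x *v e)))) (at \<tau>)"
      by (auto intro!: derivative_eq_intros)
    have "(G has_derivative (\<lambda>h. K *v (F' (xs + \<tau> *\<^sub>R e) *v (h *\<^sub>R e)) - h *\<^sub>R (K *v (F' x *v e)))) (at \<tau>)"
      unfolding G_def by (rule has_derivative_diff[OF c2 c3])
    moreover have "(\<lambda>h. K *v (F' (xs + \<tau> *\<^sub>R e) *v (h *\<^sub>R e)) - h *\<^sub>R (K *v (F' x *v e))) = (\<lambda>h. h *\<^sub>R G' \<tau>)"
      unfolding G'_def by (simp add: matrix_vector_mult_scaleR algebra_simps)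
    ultimately show ?thesis unfolding has_vector_derivative_def by simp
  qed
  have \<phi>d: "(\<phi> has_vector_derivative \<phi>' \<tau>) (at \<tau>)" if "0 < \<tau>" "\<tau> < 1" for \<tau>
  proof -
    have "\<tau> * t < 1 * t" using that t0 by (intro mult_strict_right_mono) auto
    hence "\<tau> * t < R" using tR by linarith
    hence in1: "\<tau> * t \<in> {0<..<R}" using that t0 by auto
    have int: "\<tau> * t \<in> interior {0..<R}"
      using in1 interior_mono[of "{0<..<R}" "{0..<R}"] by (auto simp: interior_open)
    have fd: "(f has_real_derivative df (\<tau> * t)) (at (\<tau> * t))"
      using f_deriv[of "\<tau> * t"] in1 at_within_interior[OF int] by auto
    have "((\<lambda>\<tau>. f (\<tau> * t)) has_real_derivative df (\<tau> * t) * t) (at \<tau>)"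
      by (rule DERIV_chain2[where f=f and g="\<lambda>\<tau>. \<tau> * t", OF fd]) (auto intro!: derivative_eq_intros)
    hence "(\<phi> has_real_derivative t * df t - df (\<tau> * t) * t) (at \<tau>)"
      unfolding \<phi>_def by (auto intro!: derivative_eq_intros)
    thus ?thesis unfolding \<phi>'_def by (simp add: has_real_derivative_iff_has_vector_derivative)
  qed
  have Gc: "continuous_on {0..1} G"
    using Gd by (intro continuous_at_imp_continuous_on ballI has_derivative_continuous)
      (auto simp: has_vector_derivative_def)
  have fc: "continuous_on {0..<R} f" by (rule DERIV_continuous_on[OF f_deriv])
  have \<phi>c: "continuous_on {0..1} \<phi>"
  proof -
    have "continuous_on {0..1} (\<lambda>\<tau>. f (\<tau> * t))"
    proof (rule continuous_on_compose2[OF fc])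
      show "continuous_on {0..1} (\<lambda>\<tau>. \<tau> * t)" by (intro continuous_intros)
      show "(\<lambda>\<tau>. \<tau> * t) ` {0..1} \<subseteq> {0..<R}"
      proof
        fix s assume "s \<in> (\<lambda>\<tau>. \<tau> * t) ` {0..1}"
        then obtain \<tau> where "\<tau> \<in> {0..1}" "s = \<tau> * t" by auto
        moreover have "\<tau> * t \<le> 1 * t" using \<open>\<tau> \<in> {0..1}\<close> t0 by (intro mult_right_mono) auto
        moreover have "0 \<le> \<tau> * t" using \<open>\<tau> \<in> {0..1}\<close> t0 by auto
        ultimately show "s \<in> {0..<R}" using tR by simp
      qed
    qed
    thus ?thesis unfolding \<phi>_def by (intro continuous_intros)
  qed
  have bd: "norm (G' \<tau>) \<le> \<phi>' \<tau>" if "0 < \<tau>" "\<tau> < 1" for \<tau>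
  proof -
    have "G' \<tau> = - ((K ** (F' x - F' (xs + \<tau> *\<^sub>R e))) *v e)"
      unfolding G'_def by (simp add: matrix_vector_mul_assoc[symmetric] algebra_simps)
    hence "norm (G' \<tau>) = norm ((K ** (F' x - F' (xs + \<tau> *\<^sub>R e))) *v e)" by simp
    also have "\<dots> \<le> mat_norm (K ** (F' x - F' (xs + \<tau> *\<^sub>R e))) * t"
      using mat_norm_bound t_def e_def by simp
    also have "\<dots> \<le> (df t - df (\<tau> * t)) * t"
      using bnd[of \<tau>] that t0 e_def by (intro mult_right_mono) auto
    finally show ?thesis unfolding \<phi>'_def by (simp add: algebra_simps)
  qed
  have "norm (G 1 - G 0) \<le> \<phi> 1 - \<phi> 0"
    by (rule differentiable_bound_general[OF zero_less_one Gc \<phi>c _ \<phi>d bd]) (auto intro: Gd)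
  moreover have "G 1 - G 0 = K *v (F x - F xs - F' x *v (x - xs))"
    unfolding G_def e_def by (simp add: algebra_simps)
  moreover have "\<phi> 1 - \<phi> 0 = t * df t - f t" unfolding \<phi>_def using f0 by simp
  ultimately show ?thesis by simp
qed

lemma small_t:
  fixes f df :: "real \<Rightarrow> real"
  assumes R_pos: "R > 0"
    and f_deriv: "\<And>t. t \<in> {0..<R} \<Longrightarrow> (f has_real_derivative df t) (at t within {0..<R})"
    and df_cont: "continuous_on {0..<R} df"
    and h1: "f 0 = 0" "df 0 = -1"
    and c1: "a * (0::real) + c < 1"
  shows "\<exists>b>0. b \<le> R \<and> (\<forall>s. 0 < s \<and> s < b \<longrightarrow> a * (f s / (s * df s) - 1) + c < 1 \<and> df s < 0)"
proof -
  let ?F = "at (0::real) within {0<..<R}"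
  have "((\<lambda>s. (f s - f 0) / (s - 0)) \<longlongrightarrow> df 0) (at 0 within {0..<R})"
    using f_deriv[of 0] R_pos by (simp add: has_field_derivative_iff)
  hence "((\<lambda>s. (f s - f 0) / (s - 0)) \<longlongrightarrow> df 0) ?F"
    by (rule tendsto_within_subset) auto
  hence l1: "((\<lambda>s. f s / s) \<longlongrightarrow> -1) ?F" using h1 by simp
  have "(df \<longlongrightarrow> df 0) (at 0 within {0..<R})"
    using df_cont R_pos unfolding continuous_on_def by auto
  hence "(df \<longlongrightarrow> df 0) ?F" by (rule tendsto_within_subset) auto
  hence l2: "(df \<longlongrightarrow> -1) ?F" using h1 by simp
  have "((\<lambda>s. a * ((f s / s) / df s - 1) + c) \<longlongrightarrow> a * ((-1) / (-1) - 1) + c) ?F"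
    by (intro tendsto_add tendsto_mult tendsto_diff tendsto_divide tendsto_const l1 l2) simp
  hence "((\<lambda>s. a * (f s / (s * df s) - 1) + c) \<longlongrightarrow> a * 0 + c) ?F" by simp
  hence e1: "eventually (\<lambda>s. a * (f s / (s * df s) - 1) + c < 1) ?F"
    using c1 by (rule order_tendstoD(2))
  have e2: "eventually (\<lambda>s. df s < 0) ?F" using l2 by (rule order_tendstoD(2)) simp
  have "\<exists>d>0. \<forall>s\<in>{0<..<R}. s \<noteq> 0 \<and> dist s 0 < d \<longrightarrow>
      a * (f s / (s * df s) - 1) + c < 1 \<and> df s < 0"
    using eventually_conj[OF e1 e2] by (rule eventually_at[THEN iffD1])
  then obtain d where d: "d > 0" "\<forall>s\<in>{0<..<R}. s \<noteq> 0 \<and> dist s 0 < d \<longrightarrow>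
      a * (f s / (s * df s) - 1) + c < 1 \<and> df s < 0" by blast
  show ?thesis
  proof (rule exI[of _ "min d R"], intro conjI allI impI)
    fix s assume s: "0 < s \<and> s < min d R"
    hence "s \<in> {0<..<R}" "s \<noteq> 0" "dist s 0 < d" by (auto simp: dist_real_def)
    thus "a * (f s / (s * df s) - 1) + c < 1" "df s < 0" using d(2) by blast+
  qed (use d R_pos in auto)
qed


theorem lemma3:
  fixes \<Omega> C :: "(real^'n) set"
    and F :: "real^'n \<Rightarrow> real^'n"
    and F' :: "real^'n \<Rightarrow> real^'n^'n"
    and xs :: "real^'n"
    and R \<kappa> \<nu> \<rho> \<sigma> :: real
    and f df :: "real \<Rightarrow> real"
    and vt \<omega>1 \<omega>2 lam :: real
    and x y s r x' :: "real^'n"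
    and M P :: "real^'n^'n"
    and \<eta> \<theta> :: real
  assumes \<Omega>_open: "open \<Omega>"
    and F_deriv: "\<And>z. z \<in> \<Omega> \<Longrightarrow> (F has_derivative (\<lambda>h. F' z *v h)) (at z)"
    and F'_cont: "continuous_on \<Omega> F'"
    and C_sub: "C \<subseteq> \<Omega>" and C_convex: "convex C" and C_compact: "compact C" and C_ne: "C \<noteq> {}"
    and xs_C: "xs \<in> C" and F_xs: "F xs = 0" and F'_xs_inv: "invertible (F' xs)"
    and R_pos: "R > 0"
    and \<kappa>_def: "\<kappa> = Sup {t \<in> {0..<R}. ball xs t \<subseteq> \<Omega>}"
    and f_deriv: "\<And>t. t \<in> {0..<R} \<Longrightarrow> (f has_real_derivative df t) (at t within {0..<R})"
    and df_cont: "continuous_on {0..<R} df"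
    and majorant: "\<And>\<tau> z. \<tau> \<in> {0..1} \<Longrightarrow> z \<in> ball xs \<kappa> \<Longrightarrow>
        mat_norm (matrix_inv (F' xs) ** (F' z - F' (xs + \<tau> *\<^sub>R (z - xs))))
          \<le> df (norm (z - xs)) - df (\<tau> * norm (z - xs))"
    and h1: "f 0 = 0" "df 0 = -1"
    and h2: "strict_mono_on {0..<R} df"
    and vt_rng: "0 \<le> vt" "vt < 1"
    and \<omega>_rng: "0 \<le> \<omega>2" "\<omega>2 < \<omega>1" "\<omega>1 * vt + \<omega>2 < 1"
    and lam_rng: "0 \<le> lam" "lam < (1 - \<omega>2 - \<omega>1 * vt) / (\<omega>1 * (1 + vt))"
    and \<nu>_def: "\<nu> = Sup {t \<in> {0..<R}. df t < 0}"
    and \<rho>_def: "\<rho> = Sup {\<delta> \<in> {0<..<\<nu>}. \<forall>t \<in> {0<..<\<delta>}.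
        \<omega>1 * (1 + vt) * (1 + lam) * (f t / (t * df t) - 1)
          + \<omega>1 * ((1 + vt) * lam + vt) + \<omega>2 < 1}"
    and \<sigma>_def: "\<sigma> = min \<kappa> \<rho>"
    and x_C: "x \<in> C" and x_ball: "x \<in> ball xs \<sigma>" and x_ne: "x \<noteq> xs"
    and Fx_ne: "F x \<noteq> 0"
    and M_inv: "invertible M"
    and M1: "mat_norm (matrix_inv M ** F' x) \<le> \<omega>1"
    and M2: "mat_norm (matrix_inv M ** F' x - mat 1) \<le> \<omega>2"
    and step: "M *v s = - F x + r" and y_def: "y = x + s"
    and P_inv: "invertible P"
    and res: "norm (P *v r) \<le> \<eta> * norm (P *v F x)"
    and \<eta>_rng: "0 \<le> \<eta> * cond_num (P ** F' x)" "\<eta> * cond_num (P ** F' x) \<le> vt"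
    and \<theta>_nonneg: "\<theta> \<ge> 0"
    and next_it: "CondG_output C y x (\<theta> * (norm s)\<^sup>2) x'"
  shows "norm (x' - xs) \<le> \<omega>1 * (1 + vt) * (1 + sqrt (2 * \<theta>)) * \<bar>newton_fun f df (norm (x - xs))\<bar>
            + (\<omega>1 * ((1 + vt) * sqrt (2 * \<theta>) + vt) + \<omega>2) * norm (x - xs)
       \<and> (\<theta> \<le> lam\<^sup>2 / 2 \<longrightarrow> norm (x' - xs) < norm (x - xs))"
proof -
  define t where "t = norm (x - xs)"
  define e where "e = x - xs"
  have t0: "t > 0" using x_ne by (simp add: t_def)
  have tsig: "t < \<sigma>" using x_ball by (simp add: t_def dist_norm norm_minus_commute)
  hence tk: "t < \<kappa>" and tr: "t < \<rho>" using \<sigma>_def by auto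
  have Kb: "bdd_above {t \<in> {0..<R}. ball xs t \<subseteq> \<Omega>}" by (rule bdd_aboveI[of _ R]) auto
  have Kne: "{t \<in> {0..<R}. ball xs t \<subseteq> \<Omega>} \<noteq> {}"
  proof -
    have "0 \<in> {t \<in> {0..<R}. ball xs t \<subseteq> \<Omega>}" using R_pos by auto
    thus ?thesis by blast
  qed
  obtain t1 where t1: "t1 \<in> {0..<R}" "ball xs t1 \<subseteq> \<Omega>" "t < t1"
    using less_cSup_iff[OF Kne Kb] tk \<kappa>_def by auto
  have tR: "t < R" using t1 by auto
  have seg_in: "xs + \<tau> *\<^sub>R e \<in> \<Omega>" if "\<tau> \<in> {0..1}" for \<tau>
  proof -
    have "norm (\<tau> *\<^sub>R e) = \<tau> * t" using that by (simp add: t_def e_def)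
    also have "\<dots> \<le> 1 * t" using that t0 by (intro mult_right_mono) auto
    finally have "dist xs (xs + \<tau> *\<^sub>R e) < t1" using t1 by (simp add: dist_norm)
    thus ?thesis using t1 by auto
  qed
  have x_kball: "x \<in> ball xs \<kappa>" using x_ball \<sigma>_def by auto
  define a where "a = \<omega>1 * (1 + vt) * (1 + lam)"
  define c where "c = \<omega>1 * ((1 + vt) * lam + vt) + \<omega>2"
  have \<omega>1pos: "\<omega>1 > 0" using \<omega>_rng by linarith
  have c1: "a * 0 + c < 1"
  proof -
    have "0 < \<omega>1 * (1 + vt)" using \<omega>1pos vt_rng by simp
    hence "lam * (\<omega>1 * (1 + vt)) < 1 - \<omega>2 - \<omega>1 * vt" using lam_rng(2) by (simp add: pos_less_divide_eq)
    thus ?thesis unfolding c_def by (simp add: algebra_simps)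
  qed
  obtain b where b: "b > 0" "b \<le> R" "\<And>s. 0 < s \<Longrightarrow> s < b \<Longrightarrow> a * (f s / (s * df s) - 1) + c < 1 \<and> df s < 0"
    using small_t[OF R_pos f_deriv df_cont h1 c1] by blast
  have Nb: "bdd_above {t \<in> {0..<R}. df t < 0}" by (rule bdd_aboveI[of _ R]) auto
  have Nne: "{t \<in> {0..<R}. df t < 0} \<noteq> {}"
  proof -
    have "0 \<in> {t \<in> {0..<R}. df t < 0}" using R_pos h1 by auto
    thus ?thesis by blast
  qed
  have "b / 2 \<in> {t \<in> {0..<R}. df t < 0}" using b(1,2) b(3)[of "b/2"] by auto
  hence \<nu>b: "b / 2 \<le> \<nu>" unfolding \<nu>_def by (rule cSup_upper[OF _ Nb])
  let ?RS = "{\<delta> \<in> {0<..<\<nu>}. \<forall>t \<in> {0<..<\<delta>}.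
        \<omega>1 * (1 + vt) * (1 + lam) * (f t / (t * df t) - 1)
          + \<omega>1 * ((1 + vt) * lam + vt) + \<omega>2 < 1}"
  have "b / 4 \<in> ?RS"
  proof -
    have "\<omega>1 * (1 + vt) * (1 + lam) * (f s / (s * df s) - 1)
          + \<omega>1 * ((1 + vt) * lam + vt) + \<omega>2 < 1" if "s \<in> {0<..<b/4}" for s
      using b(3)[of s] that unfolding a_def c_def by auto
    thus ?thesis using b \<nu>b by auto
  qed
  hence RSne: "?RS \<noteq> {}" by blast
  have RSb: "bdd_above ?RS" by (rule bdd_aboveI[of _ \<nu>]) auto
  obtain \<delta> where \<delta>: "\<delta> \<in> ?RS" "t < \<delta>" using less_cSup_iff[OF RSne RSb] tr \<rho>_def by auto
  have "\<omega>1 * (1 + vt) * (1 + lam) * (f t / (t * df t) - 1)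
          + \<omega>1 * ((1 + vt) * lam + vt) + \<omega>2 < 1" using \<delta> t0 by auto
  hence cond_t: "a * (f t / (t * df t) - 1) + c < 1" unfolding a_def c_def by linarith
  have t\<nu>: "t < \<nu>" using \<delta> by auto
  obtain t2 where t2: "t2 \<in> {0..<R}" "df t2 < 0" "t < t2" using less_cSup_iff[OF Nne Nb] t\<nu> \<nu>_def by auto
  have "df t < df t2" by (rule strict_mono_onD[OF h2]) (use t2 t0 in auto)
  hence dft: "df t < 0" using t2 by linarith
  have "df 0 < df t" by (rule strict_mono_onD[OF h2]) (use t0 tR in auto)
  hence dft1: "-1 < df t" using h1 by simp
  define A where "A = F' x"
  define Ai where "Ai = matrix_inv (F' xs)"
  have AiAs: "Ai ** F' xs = mat 1" using matrix_inv_props[OF F'_xs_inv] Ai_def by simp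
  have qb: "mat_norm (Ai ** (A - F' xs)) \<le> df t + 1"
    using majorant[of 0 x] x_kball h1 unfolding Ai_def A_def t_def by simp
  define B where "B = Ai ** A"
  have Bv: "B *v v = v + (Ai ** (A - F' xs)) *v v" for v
  proof -
    have "Ai *v (F' xs *v v) = v" by (simp add: matrix_vector_mul_assoc AiAs)
    thus ?thesis unfolding B_def
      by (simp add: matrix_vector_mul_assoc[symmetric] matrix_vector_mult_diff_rdistrib matrix_vector_mult_diff_distrib)
  qed
  have lowb: "(- df t) * norm v \<le> norm (B *v v)" for v
  proof -
    have "norm ((Ai ** (A - F' xs)) *v v) \<le> (df t + 1) * norm v"
      using mat_norm_bound[of "Ai ** (A - F' xs)" v] qb by (meson mult_right_mono norm_ge_zero order_trans)
    moreover have "norm v \<le> norm (B *v v) + norm ((Ai ** (A - F' xs)) *v v)"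
      using norm_triangle_ineq4[of "B *v v" "(Ai ** (A - F' xs)) *v v"] Bv[of v] by (simp add: algebra_simps)
    ultimately show ?thesis by (simp add: algebra_simps)
  qed
  have Ainj: "\<forall>v. A *v v = 0 \<longrightarrow> v = 0"
  proof (intro allI impI)
    fix v assume "A *v v = 0"
    hence "B *v v = 0" unfolding B_def by (simp add: matrix_vector_mul_assoc[symmetric])
    hence "(- df t) * norm v \<le> 0" using lowb[of v] by simp
    thus "v = 0" using dft by (simp add: zero_le_mult_iff)
  qed
  have Ainv: "invertible A" using Ainj matrix_left_invertible_ker invertible_left_inverse by blast
  define u where "u = matrix_inv A *v F x"
  have Au: "A *v u = F x" unfolding u_def
    by (simp add: matrix_vector_mul_assoc matrix_inv_props[OF Ainv])
  have mv: "norm (Ai *v (F x - F xs - A *v e)) \<le> t * df t - f t"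
    unfolding A_def e_def
  proof (rule mv_bound[OF t_def t0 tR _ f_deriv _ h1(1)])
    fix \<tau> :: real assume "\<tau> \<in> {0..1}"
    thus "(F has_derivative (\<lambda>h. F' (xs + \<tau> *\<^sub>R (x - xs)) *v h)) (at (xs + \<tau> *\<^sub>R (x - xs)))"
      using F_deriv seg_in e_def by auto
  next
    fix \<tau> :: real assume "\<tau> \<in> {0..1}"
    thus "mat_norm (Ai ** (F' x - F' (xs + \<tau> *\<^sub>R (x - xs)))) \<le> df t - df (\<tau> * t)"
      using majorant[of \<tau> x] x_kball unfolding Ai_def t_def by simp
  qed
  have "B *v (e - u) = - (Ai *v (F x - F xs - A *v e))"
    unfolding B_def using Au F_xs by (simp add: matrix_vector_mul_assoc[symmetric] algebra_simps)
  hence "(- df t) * norm (e - u) \<le> t * df t - f t" using lowb[of "e - u"] mv by simp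
  hence eu: "norm (e - u) \<le> (t * df t - f t) / (- df t)" using dft by (subst pos_le_divide_eq) (auto simp: mult.commute)
  have num0: "0 \<le> t * df t - f t" using mv norm_ge_zero order_trans by blast
  define nf where "nf = newton_fun f df t"
  have nf_eq: "nf = (t * df t - f t) / df t" unfolding nf_def newton_fun_def using dft by (simp add: field_simps)
  have nf_le: "nf \<le> 0" unfolding nf_eq using num0 dft by (simp add: divide_nonneg_neg)
  have abs_nf: "\<bar>nf\<bar> = (t * df t - f t) / (- df t)" using nf_le nf_eq by (simp add: abs_if)
  have eu2: "norm (e - u) \<le> \<bar>nf\<bar>" using eu abs_nf by simp
  have nu: "norm u \<le> \<bar>nf\<bar> + t"
    using norm_triangle_ineq4[of e "e - u"] eu2 unfolding t_def e_def by simp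
  define Mi where "Mi = matrix_inv M"
  have MiM: "Mi ** M = mat 1" using matrix_inv_props[OF M_inv] Mi_def by simp
  define Q where "Q = Mi ** A"
  have Qb: "norm (Q *v v) \<le> \<omega>1 * norm v" for v
    using mat_norm_bound[of Q v] M1 unfolding Q_def Mi_def A_def by (meson mult_right_mono norm_ge_zero order_trans)
  have Q1b: "norm ((Q - mat 1) *v v) \<le> \<omega>2 * norm v" for v
    using mat_norm_bound[of "Q - mat 1" v] M2 unfolding Q_def Mi_def A_def by (meson mult_right_mono norm_ge_zero order_trans)
  define N where "N = P ** A"
  have Ninv: "invertible N" unfolding N_def by (rule invertible_mult[OF P_inv Ainv])
  define Ni where "Ni = matrix_inv N"
  define w where "w = Ni *v (P *v r)"
  have "P *v (A *v w) = N *v (Ni *v (P *v r))"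
    unfolding w_def N_def by (simp only: matrix_vector_mul_assoc matrix_mul_assoc)
  also have "\<dots> = (N ** Ni) *v (P *v r)" by (rule matrix_vector_mul_assoc)
  also have "\<dots> = P *v r" unfolding Ni_def matrix_inv_props(1)[OF Ninv] by simp
  finally have "P *v (A *v w) = P *v r" .
  hence Aw: "A *v w = r" using inj_matrix_vector_mult[OF P_inv] by (auto dest: injD)
  have Nu: "P *v F x = N *v u" unfolding N_def using Au by (simp add: matrix_vector_mul_assoc[symmetric])
  have wb: "norm w \<le> vt * norm u"
  proof (cases "\<eta> \<ge> 0")
    case True
    have "norm w \<le> mat_norm Ni * norm (P *v r)" unfolding w_def by (rule mat_norm_bound)
    also have "\<dots> \<le> mat_norm Ni * (\<eta> * (mat_norm N * norm u))"
    proof (intro mult_left_mono mat_norm_nonneg)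
      have "norm (P *v r) \<le> \<eta> * norm (N *v u)" using res Nu by simp
      also have "\<dots> \<le> \<eta> * (mat_norm N * norm u)" using True mat_norm_bound[of N u] by (intro mult_left_mono)
      finally show "norm (P *v r) \<le> \<eta> * (mat_norm N * norm u)" .
    qed
    also have "\<dots> = (\<eta> * cond_num (P ** F' x)) * norm u"
      unfolding cond_num_def N_def[symmetric] A_def[symmetric] Ni_def[symmetric] by simp
    also have "\<dots> \<le> vt * norm u" using \<eta>_rng(2) by (rule mult_right_mono) simp
    finally show ?thesis .
  next
    case False
    have "norm (P *v r) \<le> \<eta> * norm (P *v F x)" by (rule res)
    also have "\<dots> \<le> 0" using False by (simp add: mult_nonpos_nonneg)
    finally have "P *v r = 0" by simp
    hence "w = 0" unfolding w_def by simp
    thus ?thesis using vt_rng by simp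
  qed
  have "M ** Q = (M ** Mi) ** A" unfolding Q_def by (metis matrix_mul_assoc)
  hence MQ: "M ** Q = A" unfolding Mi_def matrix_inv_props(1)[OF M_inv] by simp
  have "M *v (Q *v (w - u)) = A *v (w - u)" by (simp add: matrix_vector_mul_assoc MQ)
  also have "\<dots> = - F x + r" using Aw Au by (simp add: matrix_vector_mult_diff_distrib)
  finally have "M *v (Q *v (w - u)) = - F x + r" .
  hence "M *v (Q *v (w - u)) = M *v s" using step by simp
  hence s_eq: "s = Q *v (w - u)" using inj_matrix_vector_mult[OF M_inv] by (auto dest: injD)
  have y_eq: "y - xs = Q *v (e - u) - (Q - mat 1) *v e + Q *v w"
    unfolding y_def s_eq e_def by (simp add: matrix_vector_mult_diff_distrib matrix_vector_mult_diff_rdistrib algebra_simps)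
  have yb: "norm (y - xs) \<le> \<omega>1 * \<bar>nf\<bar> + \<omega>2 * t + \<omega>1 * (vt * (\<bar>nf\<bar> + t))"
  proof -
    have "norm (y - xs) \<le> norm (Q *v (e - u)) + norm ((Q - mat 1) *v e) + norm (Q *v w)"
      unfolding y_eq by (rule order_trans[OF norm_triangle_ineq] add_mono norm_triangle_ineq4)+ simp
    also have "\<dots> \<le> \<omega>1 * \<bar>nf\<bar> + \<omega>2 * t + \<omega>1 * (vt * (\<bar>nf\<bar> + t))"
    proof (intro add_mono)
      show "norm (Q *v (e - u)) \<le> \<omega>1 * \<bar>nf\<bar>"
        using Qb[of "e - u"] eu2 \<omega>1pos by (meson mult_left_mono less_imp_le order_trans)
      show "norm ((Q - mat 1) *v e) \<le> \<omega>2 * t" using Q1b[of e] unfolding t_def e_def .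
      have "vt * norm u \<le> vt * (\<bar>nf\<bar> + t)" using nu vt_rng by (intro mult_left_mono) auto
      thus "norm (Q *v w) \<le> \<omega>1 * (vt * (\<bar>nf\<bar> + t))"
        using Qb[of w] wb \<omega>1pos by (meson mult_left_mono less_imp_le order_trans)
    qed
    finally show ?thesis .
  qed
  have sb: "norm s \<le> \<omega>1 * (1 + vt) * (\<bar>nf\<bar> + t)"
  proof -
    have "norm s \<le> \<omega>1 * norm (w - u)" unfolding s_eq by (rule Qb)
    also have "norm (w - u) \<le> vt * norm u + norm u" using wb norm_triangle_ineq4[of w u] by linarith
    also have "\<dots> = (1 + vt) * norm u" by (simp add: algebra_simps)
    also have "\<dots> \<le> (1 + vt) * (\<bar>nf\<bar> + t)" using nu vt_rng by (intro mult_left_mono) auto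
    finally show ?thesis using \<omega>1pos by (simp add: mult_left_mono mult.assoc)
  qed
  define S where "S = sqrt (2 * \<theta>)"
  have S0: "S \<ge> 0" unfolding S_def using \<theta>_nonneg by simp
  have "norm (x' - xs) \<le> norm (y - xs) + sqrt (\<theta> * (norm s)\<^sup>2)"
    by (rule condg_bound[OF next_it xs_C]) (use \<theta>_nonneg in simp)
  also have "sqrt (\<theta> * (norm s)\<^sup>2) = sqrt \<theta> * norm s" by (simp add: real_sqrt_mult)
  also have "\<dots> \<le> S * norm s" unfolding S_def using \<theta>_nonneg by (intro mult_right_mono) auto
  also have "\<dots> \<le> S * (\<omega>1 * (1 + vt) * (\<bar>nf\<bar> + t))" using sb S0 by (rule mult_left_mono)
  finally have xb: "norm (x' - xs) \<le> norm (y - xs) + S * (\<omega>1 * (1 + vt) * (\<bar>nf\<bar> + t))" by simp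
  have part1: "norm (x' - xs) \<le> \<omega>1 * (1 + vt) * (1 + S) * \<bar>nf\<bar> + (\<omega>1 * ((1 + vt) * S + vt) + \<omega>2) * t"
  proof -
    have "\<omega>1 * \<bar>nf\<bar> + \<omega>2 * t + \<omega>1 * (vt * (\<bar>nf\<bar> + t)) + S * (\<omega>1 * (1 + vt) * (\<bar>nf\<bar> + t))
        = \<omega>1 * (1 + vt) * (1 + S) * \<bar>nf\<bar> + (\<omega>1 * ((1 + vt) * S + vt) + \<omega>2) * t"
      by (simp add: algebra_simps)
    thus ?thesis using xb yb by linarith
  qed
  have part2: "norm (x' - xs) < t" if th: "\<theta> \<le> lam\<^sup>2 / 2"
  proof -
    have "S \<le> sqrt (lam\<^sup>2)" unfolding S_def using th by (intro real_sqrt_le_mono) simp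
    hence Sl: "S \<le> lam" using lam_rng by simp
    have nfid: "\<bar>nf\<bar> = t * (f t / (t * df t) - 1)"
    proof -
      have e: "t * df t + \<bar>nf\<bar> * df t = f t" using abs_nf dft by (simp add: field_simps)
      have "t * (t * df t) + t * (\<bar>nf\<bar> * df t) = t * f t" by (metis e distrib_left)
      thus ?thesis using t0 dft by (simp add: field_simps)
    qed
    have nt: "0 \<le> \<bar>nf\<bar> + t" using t0 by simp
    have "\<omega>1 * (1 + vt) * (1 + S) * \<bar>nf\<bar> + (\<omega>1 * ((1 + vt) * S + vt) + \<omega>2) * t
        = \<omega>1 * (1 + vt) * (\<bar>nf\<bar> + t) * S + (\<omega>1 * (1 + vt) * \<bar>nf\<bar> + (\<omega>1 * vt + \<omega>2) * t)"
      by (simp add: algebra_simps)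
    also have "\<dots> \<le> \<omega>1 * (1 + vt) * (\<bar>nf\<bar> + t) * lam + (\<omega>1 * (1 + vt) * \<bar>nf\<bar> + (\<omega>1 * vt + \<omega>2) * t)"
      using Sl \<omega>1pos vt_rng nt by (intro add_right_mono mult_left_mono) auto
    also have "\<dots> = a * \<bar>nf\<bar> + c * t" unfolding a_def c_def by (simp add: algebra_simps)
    also have "\<dots> = t * (a * (f t / (t * df t) - 1) + c)"
      unfolding nfid by (simp add: algebra_simps)
    also have "\<dots> < t * 1" using cond_t t0 by (intro mult_strict_left_mono)
    finally show ?thesis using part1 by simp
  qed
  show ?thesis using part1 part2 unfolding S_def nf_def t_def by simp
qed

end
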